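(* Let $S$ be a finite nonempty set of positive integers and $s=\max S$. The minimum density of a $1$-identifying code in the distance graph $G(S)$ is achieved by a periodic set with period at most $(6s)2^{6s}$.
   Context: The distance graph $G(S)$ has vertex set $\mathbb{Z}$, with $i,j$ adjacent iff $|i-j|\in S$. For a vertex $u$, $B_r(u)$ is the set of vertices at graph distance at most $r$ from $u$ in $G(S)$. A set $A\subseteq\mathbb{Z}$ is an $r$-identifying code if for every pair of distinct vertices $u,v$, the sets $A\cap B_r(u)$ and $A\cap B_r(v)$ are nonempty and distinct. The density of $A$ is $\delta(A)=\limsup_{N\to\infty}\frac{|A\cap[-N,N]|}{2N+1}$. A set $A$ is periodic with period $p$ if $A+p=A$. *)

theory Defs
  imports "HOL-Analysis.Analysis"
begin

text \<open>Closed ball of radius 1 around u in the distance graph G(S) on the integers: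
  vertices at graph distance at most 1 from u, i.e. u itself and its neighbours.\<close>
definition ball1 :: "int set \<Rightarrow> int \<Rightarrow> int set" where
  "ball1 S u = {v. v = u \<or> \<bar>u - v\<bar> \<in> S}"

definition identifying_code1 :: "int set \<Rightarrow> int set \<Rightarrow> bool" where
  "identifying_code1 S A \<longleftrightarrow>
     (\<forall>u v. u \<noteq> v \<longrightarrow>
        A \<inter> ball1 S u \<noteq> {} \<and> A \<inter> ball1 S v \<noteq> {} \<and>
        A \<inter> ball1 S u \<noteq> A \<inter> ball1 S v)"

definition density :: "int set \<Rightarrow> ereal" where
  "density A = limsup (\<lambda>N::nat. ereal (real (card (A \<inter> {- int N .. int N})) / (2 * real N + 1)))"

definition periodic_with :: "int set \<Rightarrow> int \<Rightarrow> bool" where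
  "periodic_with A p \<longleftrightarrow> (\<lambda>x. x + p) ` A = A"

end

theory Submission
  imports Defs "HOL-Real_Asymp.Real_Asymp"
begin


lemma ball1_shift: "v \<in> ball1 S (u + t) \<longleftrightarrow> v - t \<in> ball1 S u"
  unfolding ball1_def by (auto simp: algebra_simps)

lemma ball1_bound:
  assumes "finite S" "v \<in> ball1 S u" "\<forall>x\<in>S. x > 0" "S \<noteq> {}"
  shows "\<bar>u - v\<bar> \<le> Max S"
  using assms unfolding ball1_def
  by (auto intro: Max_ge simp: ) (metis Max_ge abs_0 abs_ge_zero all_not_in_conv dual_order.trans less_le_not_le)

lemma ident_local:
  assumes fin: "finite S" and ne: "S \<noteq> {}" and pos: "\<forall>x\<in>S. x > 0"
    and idB: "identifying_code1 S B"
    and win: "\<forall>x. \<exists>y. \<forall>d. 0 \<le> d \<and> d < 4 * Max S + 1 \<longrightarrow> (x + d \<in> A \<longleftrightarrow> y + d \<in> B)"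
  shows "identifying_code1 S A"
proof -
  define s where "s = Max S"
  have bd: "\<And>u v. v \<in> ball1 S u \<Longrightarrow> \<bar>u - v\<bar> \<le> s"
    using ball1_bound[OF fin _ pos ne] s_def by blast
  have nonempty: "A \<inter> ball1 S u \<noteq> {}" for u
  proof -
    obtain y where y: "\<forall>d. 0 \<le> d \<and> d < 4 * s + 1 \<longrightarrow> (u - s + d \<in> A \<longleftrightarrow> y + d \<in> B)"
      using win s_def by blast
    have "B \<inter> ball1 S (y + s) \<noteq> {}" using idB unfolding identifying_code1_def
      by (metis add.right_neutral add_left_cancel zero_neq_one)
    then obtain b where b: "b \<in> B" "b \<in> ball1 S (y + s)" by blast
    have "\<bar>y + s - b\<bar> \<le> s" using bd[OF b(2)] .
    hence "0 \<le> b - y" "b - y < 4 * s + 1" by auto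
    with y b(1) have "u - s + (b - y) \<in> A" by auto
    moreover have "u - s + (b - y) \<in> ball1 S u"
      using ball1_shift[of b S y s] ball1_shift[of "u - s + (b - y)" S u 0] b(2)
      by (simp add: ball1_def algebra_simps)
    ultimately show ?thesis by blast
  qed
  have dist: "A \<inter> ball1 S u \<noteq> A \<inter> ball1 S v" if uv: "u < v" for u v
  proof (cases "v - u > 2 * s")
    case True
    obtain a where a: "a \<in> A" "a \<in> ball1 S u" using nonempty by blast
    show ?thesis
    proof
      assume "A \<inter> ball1 S u = A \<inter> ball1 S v"
      with a have "a \<in> ball1 S v" by blast
      with bd[OF a(2)] bd[of a v] True show False by auto
    qed
  next
    case False
    obtain y where y: "\<forall>d. 0 \<le> d \<and> d < 4 * s + 1 \<longrightarrow> (u - s + d \<in> A \<longleftrightarrow> y + d \<in> B)"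
      using win s_def by blast
    have neq: "B \<inter> ball1 S (y + s) \<noteq> B \<inter> ball1 S (y + s + (v - u))"
      using idB uv unfolding identifying_code1_def by auto
    have trans: "b \<in> B \<inter> ball1 S (y + s + c) \<longleftrightarrow> b + (u - s - y) \<in> A \<inter> ball1 S (u + c)"
      if "0 \<le> c" "c \<le> 2 * s" for b c
    proof
      assume h: "b \<in> B \<inter> ball1 S (y + s + c)"
      have "\<bar>y + s + c - b\<bar> \<le> s" using bd h by blast
      hence "0 \<le> b - y" "b - y < 4 * s + 1" using that by auto
      with y h have "u - s + (b - y) \<in> A" by auto
      moreover have "b + (u - s - y) \<in> ball1 S (u + c)" using h
        by (simp add: ball1_def algebra_simps)
      ultimately show "b + (u - s - y) \<in> A \<inter> ball1 S (u + c)" by (simp add: algebra_simps)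
    next
      assume h: "b + (u - s - y) \<in> A \<inter> ball1 S (u + c)"
      have "\<bar>u + c - (b + (u - s - y))\<bar> \<le> s" using bd h by blast
      hence "0 \<le> b - y" "b - y < 4 * s + 1" using that by auto
      moreover have "u - s + (b - y) \<in> A" using h by (simp add: algebra_simps)
      ultimately have "y + (b - y) \<in> B" using y by blast
      hence "b \<in> B" by simp
      moreover have "b \<in> ball1 S (y + s + c)" using h
        by (simp add: ball1_def algebra_simps)
      ultimately show "b \<in> B \<inter> ball1 S (y + s + c)" by simp
    qed
    show ?thesis
    proof
      assume eq: "A \<inter> ball1 S u = A \<inter> ball1 S v"
      have "B \<inter> ball1 S (y + s + 0) = B \<inter> ball1 S (y + s + (v - u))"
      proof (intro set_eqI)
        fix b
        have "b \<in> B \<inter> ball1 S (y + s + 0) \<longleftrightarrow> b + (u - s - y) \<in> A \<inter> ball1 S (u + 0)"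
          using trans[of 0 b] False uv bd by (smt (verit))
        also have "\<dots> \<longleftrightarrow> b + (u - s - y) \<in> A \<inter> ball1 S (u + (v - u))" using eq by simp
        also have "\<dots> \<longleftrightarrow> b \<in> B \<inter> ball1 S (y + s + (v - u))"
          using trans[of "v - u" b] False uv by simp
        finally show "b \<in> B \<inter> ball1 S (y + s + 0) \<longleftrightarrow> b \<in> B \<inter> ball1 S (y + s + (v - u))" .
      qed
      with neq show False by simp
    qed
  qed
  show ?thesis unfolding identifying_code1_def
    using nonempty dist by (metis linorder_neqE)
qed



definition per :: "int \<Rightarrow> int set \<Rightarrow> int set" where "per p T = {z. z mod p \<in> T}"
definition st :: "int \<Rightarrow> int set \<Rightarrow> int \<Rightarrow> int set" where
  "st w B z = {d. 0 \<le> d \<and> d < w \<and> z + d \<in> B}"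
definition cnt :: "int set \<Rightarrow> int \<Rightarrow> int \<Rightarrow> nat" where "cnt B a b = card (B \<inter> {a..<b})"

lemma cnt_split: "a \<le> m \<Longrightarrow> m \<le> b \<Longrightarrow> cnt B a b = cnt B a m + cnt B m b"
proof -
  assume "a \<le> m" "m \<le> b"
  hence "B \<inter> {a..<b} = (B \<inter> {a..<m}) \<union> (B \<inter> {m..<b})" by auto
  thus ?thesis unfolding cnt_def by (simp add: card_Un_disjoint ivl_disj_int_two(3) inf_assoc inf_left_commute)
qed

lemma cnt_mono: "b \<le> c \<Longrightarrow> cnt B a b \<le> cnt B a c"
  unfolding cnt_def by (intro card_mono) auto

lemma st_eq_mem: "st w B i = st w B j \<Longrightarrow> 0 \<le> d \<Longrightarrow> d < w \<Longrightarrow> (i + d \<in> B \<longleftrightarrow> j + d \<in> B)"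
  unfolding st_def by (metis (mono_tags, lifting) mem_Collect_eq)

lemma per_rep:
  assumes st: "st w B i = st w B (i + p)" and p: "0 < p"
  shows "0 \<le> t \<Longrightarrow> t < p + w \<Longrightarrow> (i + t \<in> B \<longleftrightarrow> i + t mod p \<in> B)"
proof (induction "nat t" arbitrary: t rule: less_induct)
  case less
  show ?case
  proof (cases "t < p")
    case True thus ?thesis using less.prems by simp
  next
    case False
    have "i + t \<in> B \<longleftrightarrow> (i + p) + (t - p) \<in> B" by simp
    also have "\<dots> \<longleftrightarrow> i + (t - p) \<in> B" using st_eq_mem[OF st, of "t - p"] False less.prems by auto
    also have "\<dots> \<longleftrightarrow> i + (t - p) mod p \<in> B"
    proof -
      have "nat (t - p) < nat t" using False p by simp
      moreover have "0 \<le> t - p" "t - p < p + w" using False less.prems p by auto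
      ultimately show ?thesis using less.hyps by blast
    qed
    also have "(t - p) mod p = t mod p" by (metis diff_add_cancel mod_add_self2)
    finally show ?thesis .
  qed
qed

lemma per_window:
  assumes st: "st w B i = st w B (i + p)" and p: "0 < p"
  shows "\<forall>x. \<exists>y. \<forall>d. 0 \<le> d \<and> d < w \<longrightarrow> (x + d \<in> per p {t. 0 \<le> t \<and> t < p \<and> i + t \<in> B} \<longleftrightarrow> y + d \<in> B)"
proof
  fix x
  show "\<exists>y. \<forall>d. 0 \<le> d \<and> d < w \<longrightarrow> (x + d \<in> per p {t. 0 \<le> t \<and> t < p \<and> i + t \<in> B} \<longleftrightarrow> y + d \<in> B)"
  proof (intro exI allI impI)
    fix d assume d: "0 \<le> d \<and> d < w"
    have "x + d \<in> per p {t. 0 \<le> t \<and> t < p \<and> i + t \<in> B} \<longleftrightarrow> i + (x + d) mod p \<in> B"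
      using p by (simp add: per_def)
    also have "(x + d) mod p = (x mod p + d) mod p" by (simp add: mod_add_left_eq)
    also have "i + (x mod p + d) mod p \<in> B \<longleftrightarrow> i + (x mod p + d) \<in> B"
    proof -
      have hb: "x mod p + d < p + w" using d pos_mod_bound[OF p, of x] by linarith
      have h0: "0 \<le> x mod p + d" using d pos_mod_sign[OF p, of x] by linarith
      show ?thesis using per_rep[OF st p h0 hb] by simp
    qed
    finally show "x + d \<in> per p {t. 0 \<le> t \<and> t < p \<and> i + t \<in> B} \<longleftrightarrow> (i + x mod p) + d \<in> B"
      by (simp add: add.assoc)
  qed
qed

definition spl :: "int set \<Rightarrow> int \<Rightarrow> int \<Rightarrow> int set" where
  "spl B i p = {z. (z < i \<and> z \<in> B) \<or> (i \<le> z \<and> z + p \<in> B)}"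

lemma spl_window:
  assumes st: "st w B i = st w B (i + p)"
  shows "\<forall>x. \<exists>y. \<forall>d. 0 \<le> d \<and> d < w \<longrightarrow> (x + d \<in> spl B i p \<longleftrightarrow> y + d \<in> B)"
proof
  fix x
  show "\<exists>y. \<forall>d. 0 \<le> d \<and> d < w \<longrightarrow> (x + d \<in> spl B i p \<longleftrightarrow> y + d \<in> B)"
  proof (cases "x < i")
    case True
    show ?thesis
    proof (intro exI allI impI)
      fix d assume d: "0 \<le> d \<and> d < w"
      show "x + d \<in> spl B i p \<longleftrightarrow> x + d \<in> B"
      proof (cases "x + d < i")
        case True thus ?thesis by (simp add: spl_def)
      next
        case False
        have "x + d \<in> spl B i p \<longleftrightarrow> (i + p) + (x + d - i) \<in> B"
          using False by (simp add: spl_def algebra_simps)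
        also have "\<dots> \<longleftrightarrow> i + (x + d - i) \<in> B"
          using st_eq_mem[OF st, of "x + d - i"] False d True by auto
        finally show ?thesis by simp
      qed
    qed
  next
    case False
    show ?thesis
    proof (intro exI[of _ "x + p"] allI impI)
      fix d assume d: "0 \<le> d \<and> d < w"
      show "x + d \<in> spl B i p \<longleftrightarrow> x + p + d \<in> B"
        using False d by (simp add: spl_def algebra_simps)
    qed
  qed
qed

lemma cnt_spl:
  assumes "x \<le> i" "0 \<le> p" "i + p \<le> x + n"
  shows "cnt B x (x + n) = cnt (spl B i p) x (x + n - p) + cnt B i (i + p)"
proof -
  have "cnt B x (x + n) = cnt B x i + cnt B i (i + p) + cnt B (i + p) (x + n)"
    using assms cnt_split[of x i "x + n" B] cnt_split[of i "i + p" "x + n" B] by simp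
  moreover have "cnt (spl B i p) x (x + n - p) = cnt (spl B i p) x i + cnt (spl B i p) i (x + n - p)"
    using assms by (intro cnt_split) auto
  moreover have "cnt (spl B i p) x i = cnt B x i"
    unfolding cnt_def by (rule arg_cong[where f=card]) (auto simp: spl_def)
  moreover have "cnt (spl B i p) i (x + n - p) = cnt B (i + p) (x + n)"
  proof -
    have "B \<inter> {i + p..<x + n} = (\<lambda>z. z + p) ` (spl B i p \<inter> {i..<x + n - p})"
    proof (intro set_eqI iffI)
      fix z assume "z \<in> B \<inter> {i + p..<x + n}"
      thus "z \<in> (\<lambda>z. z + p) ` (spl B i p \<inter> {i..<x + n - p})"
        by (intro image_eqI[of _ _ "z - p"]) (auto simp: spl_def)
    qed (auto simp: spl_def)
    thus ?thesis unfolding cnt_def by (simp add: card_image)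
  qed
  ultimately show ?thesis by simp
qed

lemma cnt_per:
  assumes p: "0 < p" and T: "T \<subseteq> {0..<p}"
  shows "cnt (per p T) x (x + p) = card T"
proof -
  have inj: "inj_on (\<lambda>z. z mod p) (per p T \<inter> {x..<x + p})"
  proof
    fix a b assume a: "a \<in> per p T \<inter> {x..<x + p}" and b: "b \<in> per p T \<inter> {x..<x + p}"
      and e: "a mod p = b mod p"
    have "(a - b) mod p = 0" using e by (simp add: mod_diff_eq[symmetric])
    then have "p dvd (a - b)" by (simp add: dvd_eq_mod_eq_0)
    then obtain k where k: "a - b = p * k" by (auto simp: dvd_def)
    have "\<bar>a - b\<bar> < p" using a b by auto
    hence "p * \<bar>k\<bar> < p * 1" using k p by (simp add: abs_mult)
    hence "\<bar>k\<bar> < 1" using p by (simp only: mult_less_cancel_left_pos)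
    hence "k = 0" by simp
    thus "a = b" using k by simp
  qed
  have "(\<lambda>z. z mod p) ` (per p T \<inter> {x..<x + p}) = T"
  proof (intro set_eqI iffI)
    fix t assume t: "t \<in> T"
    hence t0: "0 \<le> t" "t < p" using T by auto
    define z where "z = x + (t - x) mod p"
    have "z mod p = (x + (t - x)) mod p" unfolding z_def by (rule mod_add_right_eq)
    also have "\<dots> = t" using t0 by simp
    finally have zm: "z mod p = t" .
    have "x \<le> z" "z < x + p" using pos_mod_bound[OF p, of "t - x"] pos_mod_sign[OF p, of "t - x"]
      unfolding z_def by linarith+
    hence "z \<in> per p T \<inter> {x..<x + p}" using zm t by (simp add: per_def)
    thus "t \<in> (\<lambda>z. z mod p) ` (per p T \<inter> {x..<x + p})" using zm by (metis image_eqI)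
  next
    fix t assume "t \<in> (\<lambda>z. z mod p) ` (per p T \<inter> {x..<x + p})"
    then show "t \<in> T" by (auto simp: per_def)
  qed
  thus ?thesis unfolding cnt_def using card_image[OF inj] by simp
qed

lemma cnt_per_le:
  assumes "0 < p" "T \<subseteq> {0..<p}"
  shows "real (cnt (per p T) x (x + int n)) \<le> real (card T) / real_of_int p * n + card T"
proof (induction n arbitrary: x rule: less_induct)
  case (less n)
  show ?case
  proof (cases "int n < p")
    case True
    have "cnt (per p T) x (x + int n) \<le> cnt (per p T) x (x + p)" using True by (intro cnt_mono) auto
    thus ?thesis using cnt_per[OF assms] assms(1)
      by (smt (verit, ccfv_threshold) divide_nonneg_nonneg mult_nonneg_nonneg of_int_0_less_iff of_nat_0_le_iff of_nat_mono)
  next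
    case False
    define m where "m = n - nat p"
    have m: "int m = int n - p" "m < n" using False assms(1) by (auto simp: m_def)
    have "cnt (per p T) x (x + int n) = cnt (per p T) x (x + p) + cnt (per p T) (x + p) (x + p + int m)"
    proof -
      have "x + int n = x + p + int m" using m by simp
      moreover have "cnt (per p T) x (x + p + int m) = cnt (per p T) x (x + p) + cnt (per p T) (x + p) (x + p + int m)"
        using assms(1) by (intro cnt_split) auto
      ultimately show ?thesis by (simp add: add.assoc)
    qed
    also have "\<dots> = card T + cnt (per p T) (x + p) (x + p + int m)" using cnt_per[OF assms] by simp
    finally have "real (cnt (per p T) x (x + int n)) \<le> card T + (real (card T) / real_of_int p * m + card T)"
      using less.IH[OF m(2), of "x + p"] by simp
    also have "\<dots> = real (card T) / real_of_int p * n + card T"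
    proof -
      have "real n = real_of_int p + real m" using m by (metis add_diff_cancel_left' diff_add_cancel of_int_add of_int_of_nat_eq)
      thus ?thesis using assms(1) by (simp add: field_simps)
    qed
    finally show ?thesis .
  qed
qed



lemma card_pow_ivl: "0 \<le> w \<Longrightarrow> card (Pow {0..<w::int}) = 2 ^ nat w"
  by (simp add: card_Pow)

lemma lower:
  fixes \<mu> :: real and K :: nat
  assumes fin: "finite S" and ne: "S \<noteq> {}" and pos: "\<forall>x\<in>S. x > 0"
    and K: "K = 2 ^ nat (4 * Max S + 1)"
    and H: "\<And>p T. 1 \<le> p \<Longrightarrow> p \<le> int K \<Longrightarrow> T \<subseteq> {0..<p} \<Longrightarrow> identifying_code1 S (per p T) \<Longrightarrow> \<mu> * p \<le> card T"
    and mu0: "0 \<le> \<mu>"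
  shows "identifying_code1 S B \<Longrightarrow> \<mu> * (real n - K) \<le> real (cnt B x (x + int n))"
proof (induction n arbitrary: B x rule: less_induct)
  case (less n)
  define w where "w = 4 * Max S + 1"
  have s0: "Max S > 0" using fin ne pos by (simp add: Max_in)
  show ?case
  proof (cases "n \<le> K")
    case True
    hence "\<mu> * (real n - K) \<le> 0" using mu0 by (simp add: mult_nonneg_nonpos)
    thus ?thesis by simp
  next
    case False
    define f where "f t = st w B (x + int t)" for t
    have "\<not> inj_on f {0..K}"
    proof
      assume inj: "inj_on f {0..K}"
      have "f ` {0..K} \<subseteq> Pow {0..<w}" unfolding f_def st_def by auto
      from card_inj_on_le[OF inj this] have "card {0..K} \<le> card (Pow {0..<w})" by simp
      also have "\<dots> = K" using K w_def s0 by (simp add: card_Pow)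
      finally show False by simp
    qed
    then obtain t1 t2 where t: "t1 \<in> {0..K}" "t2 \<in> {0..K}" "t1 \<noteq> t2" "f t1 = f t2"
      unfolding inj_on_def by blast
    obtain a b where ab: "a < b" "b \<le> K" "f a = f b"
      using t by (metis atLeastAtMost_iff linorder_neqE_nat)
    define i where "i = x + int a"
    define p where "p = int b - int a"
    have p0: "0 < p" and pK: "p \<le> int K" using ab by (auto simp: p_def)
    have sti: "st w B i = st w B (i + p)" using ab(3) by (simp add: f_def i_def p_def)
    define T where "T = {t. 0 \<le> t \<and> t < p \<and> i + t \<in> B}"
    have Tsub: "T \<subseteq> {0..<p}" by (auto simp: T_def)
    have idP: "identifying_code1 S (per p T)"
      using ident_local[OF fin ne pos less.prems per_window[OF sti p0, unfolded w_def]] T_def by simp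
    have cT: "card T = cnt B i (i + p)"
    proof -
      have "B \<inter> {i..<i + p} = (\<lambda>t. i + t) ` T"
        by (auto simp: T_def image_iff intro!: exI[of _ "_ - i"])
      thus ?thesis unfolding cnt_def by (simp add: card_image)
    qed
    have h1: "\<mu> * p \<le> cnt B i (i + p)" using H[of p T] p0 pK Tsub idP cT by simp
    have idB': "identifying_code1 S (spl B i p)"
      using ident_local[OF fin ne pos less.prems spl_window[OF sti, unfolded w_def]] by simp
    define m where "m = n - nat p"
    have m: "m < n" "int m = int n - p" using p0 pK False by (auto simp: m_def)
    have h2: "\<mu> * (real m - K) \<le> cnt (spl B i p) x (x + int m)" using less.IH[OF m(1) idB'] .
    have "cnt B x (x + int n) = cnt (spl B i p) x (x + int n - p) + cnt B i (i + p)"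
      using p0 pK False ab by (intro cnt_spl) (auto simp: i_def p_def)
    also have "x + int n - p = x + int m" using m by simp
    finally have "real (cnt B x (x + int n)) = cnt (spl B i p) x (x + int m) + cnt B i (i + p)" by simp
    moreover have "real m = real n - p" using m by (metis of_int_of_nat_eq of_int_diff)
    ultimately have "\<mu> * real n = \<mu> * p + \<mu> * m" by (simp add: ring_distribs)
    hence "\<mu> * (real n - K) = \<mu> * p + \<mu> * (real m - K)" by (simp add: right_diff_distrib)
    thus ?thesis using h1 h2 \<open>real (cnt B x (x + int n)) = _\<close> by linarith
  qed
qed

lemma ident_UNIV:
  assumes fin: "finite S" and ne: "S \<noteq> {}" and pos: "\<forall>x\<in>S. x > 0"
  shows "identifying_code1 S UNIV"
proof -
  define s where "s = Max S"
  have sS: "s \<in> S" and s0: "s > 0" using fin ne pos by (auto simp: s_def Max_in)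
  have bd: "\<And>u v. v \<in> ball1 S u \<Longrightarrow> \<bar>u - v\<bar> \<le> s"
    using ball1_bound[OF fin _ pos ne] s_def by blast
  have "ball1 S u \<noteq> ball1 S v" if "u < v" for u v
  proof
    assume e: "ball1 S u = ball1 S v"
    have "v + s \<in> ball1 S v" using sS s0 by (simp add: ball1_def)
    hence "v + s \<in> ball1 S u" using e by simp
    from bd[OF this] that s0 show False by simp
  qed
  moreover have "ball1 S u \<noteq> {}" for u by (auto simp: ball1_def)
  ultimately show ?thesis unfolding identifying_code1_def by (metis inf_top_left linorder_neqE)
qed



lemma limsup_le_lim:
  fixes f g :: "nat \<Rightarrow> real"
  assumes "\<And>N. f N \<le> g N" "g \<longlonglongrightarrow> l"
  shows "limsup (\<lambda>N. ereal (f N)) \<le> ereal l"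
proof -
  have "limsup (\<lambda>N. ereal (f N)) \<le> limsup (\<lambda>N. ereal (g N))"
    using assms(1) by (intro Limsup_mono) auto
  also have "\<dots> = ereal l"
    by (intro lim_imp_Limsup) (auto simp: assms(2))
  finally show ?thesis .
qed

lemma lim_le_limsup:
  fixes f g :: "nat \<Rightarrow> real"
  assumes "\<And>N. g N \<le> f N" "g \<longlonglongrightarrow> l"
  shows "ereal l \<le> limsup (\<lambda>N. ereal (f N))"
proof -
  have "ereal l = limsup (\<lambda>N. ereal (g N))"
    by (intro lim_imp_Limsup[symmetric]) (auto simp: assms(2))
  also have "\<dots> \<le> limsup (\<lambda>N. ereal (f N))"
    using assms(1) by (intro Limsup_mono) auto
  finally show ?thesis .
qed

lemma card_sym: "card (A \<inter> {- int N .. int N}) = cnt A (- int N) (- int N + int (2 * N + 1))"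
  unfolding cnt_def by (rule arg_cong[where f=card]) auto

theorem theorem5:
  fixes S :: "int set"
  assumes "finite S" and "S \<noteq> {}" and "\<forall>x\<in>S. x > 0"
  shows "\<exists>A p. identifying_code1 S A \<and> 0 < p \<and> p \<le> (6 * Max S) * 2 ^ nat (6 * Max S)
           \<and> periodic_with A p
           \<and> (\<forall>B. identifying_code1 S B \<longrightarrow> density A \<le> density B)"
proof -
  note fin = assms(1) and ne = assms(2) and pos = assms(3)
  define s where "s = Max S"
  have "s \<in> S" using fin ne by (simp add: s_def Max_in)
  hence s1: "s \<ge> 1" using pos by fastforce
  define K :: nat where "K = 2 ^ nat (4 * Max S + 1)"
  define V where "V = {real (card T) / real_of_int p | p T. 1 \<le> p \<and> p \<le> int K \<and> T \<subseteq> {0..<p} \<and> identifying_code1 S (per p T)}"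
  have "V \<subseteq> (\<lambda>(p, T). real (card T) / real_of_int p) ` ({1..int K} \<times> Pow {0..<int K})"
  proof
    fix v assume "v \<in> V"
    then obtain p T where pT: "v = real (card T) / real_of_int p" "1 \<le> p" "p \<le> int K" "T \<subseteq> {0..<p}"
      unfolding V_def by blast
    hence "(p, T) \<in> {1..int K} \<times> Pow {0..<int K}" by auto
    thus "v \<in> (\<lambda>(p, T). real (card T) / real_of_int p) ` ({1..int K} \<times> Pow {0..<int K})"
      using pT(1) by (intro image_eqI[of _ _ "(p, T)"]) auto
  qed
  hence finV: "finite V" by (rule finite_subset) auto
  have "per 1 {0} = UNIV" by (auto simp: per_def)
  hence "real (card {0::int}) / real_of_int 1 \<in> V"
    unfolding V_def using ident_UNIV[OF fin ne pos] by (intro CollectI exI[of _ 1] exI[of _ "{0}"]) (auto simp: K_def)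
  hence neV: "V \<noteq> {}" by blast
  define \<mu> where "\<mu> = Min V"
  have "\<mu> \<in> V" unfolding \<mu>_def using finV neV by (rule Min_in)
  then obtain p0 T0 where p0: "\<mu> = real (card T0) / real_of_int p0" "1 \<le> p0" "p0 \<le> int K"
    "T0 \<subseteq> {0..<p0}" "identifying_code1 S (per p0 T0)"
    unfolding V_def by blast
  have mu0: "0 \<le> \<mu>" using p0 by simp
  have H: "\<mu> * p \<le> card T" if "1 \<le> p" "p \<le> int K" "T \<subseteq> {0..<p}" "identifying_code1 S (per p T)" for p T
  proof -
    have "real (card T) / real_of_int p \<in> V" unfolding V_def using that by blast
    hence "\<mu> \<le> real (card T) / real_of_int p" unfolding \<mu>_def using finV by simp
    thus ?thesis using that(1) by (simp add: field_simps)
  qed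
  define A where "A = per p0 T0"
  have low: "ereal \<mu> \<le> density B" if idB: "identifying_code1 S B" for B
  proof -
    have "\<And>N. \<mu> - \<mu> * K / (2 * real N + 1) \<le> real (card (B \<inter> {- int N .. int N})) / (2 * real N + 1)"
    proof -
      fix N :: nat
      have "\<mu> * (real (2 * N + 1) - K) \<le> real (cnt B (- int N) (- int N + int (2 * N + 1)))"
        using lower[OF fin ne pos K_def H mu0 idB] by blast
      hence "\<mu> * (2 * real N + 1) - \<mu> * K \<le> real (card (B \<inter> {- int N .. int N}))"
        by (simp add: card_sym right_diff_distrib add.commute)
      hence "(\<mu> * (2 * real N + 1) - \<mu> * K) / (2 * real N + 1) \<le> real (card (B \<inter> {- int N .. int N})) / (2 * real N + 1)"
        by (intro divide_right_mono) auto
      moreover have "(\<mu> * (2 * real N + 1) - \<mu> * K) / (2 * real N + 1) = \<mu> - \<mu> * K / (2 * real N + 1)"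
        by (simp add: field_simps)
      ultimately show "\<mu> - \<mu> * K / (2 * real N + 1) \<le> real (card (B \<inter> {- int N .. int N})) / (2 * real N + 1)"
        by simp
    qed
    moreover have "(\<lambda>N. \<mu> - \<mu> * K / (2 * real N + 1)) \<longlonglongrightarrow> \<mu>" by real_asymp
    ultimately show ?thesis unfolding density_def by (rule lim_le_limsup)
  qed
  have up: "density A \<le> ereal \<mu>"
  proof -
    have "\<And>N. real (card (A \<inter> {- int N .. int N})) / (2 * real N + 1) \<le> \<mu> + card T0 / (2 * real N + 1)"
    proof -
      fix N :: nat
      have "real (cnt A (- int N) (- int N + int (2 * N + 1))) \<le> \<mu> * real (2 * N + 1) + card T0"
        using cnt_per_le[of p0 T0 "- int N" "2 * N + 1"] p0 unfolding A_def by simp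
      hence "real (card (A \<inter> {- int N .. int N})) \<le> \<mu> * (2 * real N + 1) + card T0"
        by (simp add: card_sym add.commute)
      hence "real (card (A \<inter> {- int N .. int N})) / (2 * real N + 1) \<le> (\<mu> * (2 * real N + 1) + card T0) / (2 * real N + 1)"
        by (intro divide_right_mono) auto
      moreover have "(\<mu> * (2 * real N + 1) + card T0) / (2 * real N + 1) = \<mu> + card T0 / (2 * real N + 1)"
        by (simp add: field_simps)
      ultimately show "real (card (A \<inter> {- int N .. int N})) / (2 * real N + 1) \<le> \<mu> + card T0 / (2 * real N + 1)"
        by simp
    qed
    moreover have "(\<lambda>N. \<mu> + card T0 / (2 * real N + 1)) \<longlonglongrightarrow> \<mu>" by real_asymp
    ultimately show ?thesis unfolding density_def by (rule limsup_le_lim)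
  qed
  have per: "periodic_with A p0"
    unfolding periodic_with_def A_def per_def
  proof (intro set_eqI iffI)
    fix z assume "z \<in> (\<lambda>x. x + p0) ` {z. z mod p0 \<in> T0}"
    thus "z \<in> {z. z mod p0 \<in> T0}" by auto
  next
    fix z assume "z \<in> {z. z mod p0 \<in> T0}"
    moreover have "(z - p0) mod p0 = z mod p0" by (metis diff_add_cancel mod_add_self2)
    ultimately show "z \<in> (\<lambda>x. x + p0) ` {z. z mod p0 \<in> T0}"
      by (intro image_eqI[of _ _ "z - p0"]) auto
  qed
  have bound: "p0 \<le> (6 * Max S) * 2 ^ nat (6 * Max S)"
  proof -
    have "int K = 2 ^ nat (4 * s + 1)" by (simp add: K_def s_def)
    also have "\<dots> \<le> 2 ^ nat (6 * s)" using s1 by (intro power_increasing) auto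
    also have "\<dots> \<le> (6 * s) * 2 ^ nat (6 * s)" using s1 by simp
    finally show ?thesis using p0(3) s_def by simp
  qed
  show ?thesis
    using p0 per bound low up unfolding A_def
    by (intro exI[of _ A] exI[of _ p0]) (auto simp: A_def intro: order_trans)
qed


end
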